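(* For $\beta>-1$, $\alpha\in(0,1)$ and integer $T\ge2$, let $S_T(\alpha,\beta)=\sum_{t=1}^{T-1}\frac{1}{t^{1+\beta}(T-t)^{1+\alpha}}$ and, for $u>0$, $\xi_u=\sum_{k\ge1}k^{-(1+u)}$. Then $$S_T(\alpha,\beta)\le\frac{2^{2+\min(\alpha,\beta)}\,\xi_{\max(\alpha,\beta)}}{T^{1+\min(\alpha,\beta)}}.$$ *)

theory Defs
  imports Complex_Main
begin

definition S_sum :: "nat \<Rightarrow> real \<Rightarrow> real \<Rightarrow> real" where
  "S_sum T \<alpha> \<beta> = (\<Sum>t=1..T-1. 1 / ((real t) powr (1 + \<beta>) * (real (T - t)) powr (1 + \<alpha>)))"

definition xi :: "real \<Rightarrow> real" where
  "xi u = (\<Sum>k. (real (Suc k)) powr (-(1 + u)))"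

end

theory Submission
  imports Defs "HOL-Analysis.Summation_Tests"
begin

lemma aux1: fixes xx u v w yy :: real
  assumes "0 < xx" "0 < u" "u \<le> v" "0 < w" "w \<le> yy"
  shows "1/(xx*(yy * v)) \<le> 1/(xx * u * w)"
proof -
  have "u * w \<le> v * yy" by (rule mult_mono) (use assms in auto)
  then have "xx*(u * w) \<le> xx*(v * yy)" by (rule mult_left_mono) (use assms in auto)
  then have "xx * u * w \<le> xx*(yy * v)" by (simp only: mult.assoc mult.commute[of v yy])
  then show ?thesis using assms by (intro divide_left_mono) auto
qed

lemma aux2: fixes xx w yy :: real
  assumes "0 < xx" "0 < w" "w \<le> yy"
  shows "1/(xx*yy) \<le> 1/(xx*w)"
  using assms by (intro divide_left_mono mult_left_mono) auto

lemma aux3: fixes aa bb :: real shows "1/aa * inverse bb = 1/(bb*aa)"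
  by (simp add: divide_inverse mult.commute)

lemma key:
  fixes x y a b T :: real
  assumes x1: "1 \<le> x" and xy: "x \<le> y" and s: "x + y = T" and a: "a > -1" and b: "b > -1"
  shows "1/(x powr (1+a) * y powr (1+b)) \<le> (2/T) powr (1+min a b) * x powr -(1+max a b)"
proof -
  have x0: "x > 0" using x1 by simp
  have y0: "y > 0" using x1 xy by simp
  have Ty: "T/2 \<le> y" "T/2 > 0" using s xy x1 by auto
  have inv: "(2/T) powr e = 1 / (T/2) powr e" for e
    using Ty by (simp add: powr_divide)
  show ?thesis
  proof (cases "a \<le> b")
    case True
    have mm: "min a b = a" "max a b = b" using True by auto
    have h1: "x powr (b-a) \<le> y powr (b-a)" using True x0 xy by (intro powr_mono2) auto
    have h2: "(T/2) powr (1+a) \<le> y powr (1+a)" using a Ty by (intro powr_mono2) auto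
    have ex: "x powr (1+b) = x powr (1+a) * x powr (b-a)" by (simp add: powr_add[symmetric])
    have ey: "y powr (1+b) = y powr (1+a) * y powr (b-a)" by (simp add: powr_add[symmetric])
    have L: "1/(x powr (1+a) * (y powr (1+a) * y powr (b-a))) \<le> 1/(x powr (1+a) * x powr (b-a) * (T/2) powr (1+a))"
      by (rule aux1) (use x0 Ty h1 h2 in auto)
    have R: "(2/T) powr (1+min a b) * x powr -(1+max a b) = 1/(x powr (1+a) * x powr (b-a) * (T/2) powr (1+a))"
      by (simp only: mm inv powr_minus ex[symmetric] aux3)
    show ?thesis unfolding R ey using L .
  next
    case False
    have mm: "min a b = b" "max a b = a" using False by auto
    have h2: "(T/2) powr (1+b) \<le> y powr (1+b)" using b Ty by (intro powr_mono2) auto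
    have L: "1/(x powr (1+a) * y powr (1+b)) \<le> 1/(x powr (1+a) * (T/2) powr (1+b))"
      by (rule aux2) (use x0 Ty h2 in auto)
    have R: "(2/T) powr (1+min a b) * x powr -(1+max a b) = 1/(x powr (1+a) * (T/2) powr (1+b))"
      by (simp only: mm inv powr_minus aux3)
    show ?thesis unfolding R using L .
  qed
qed

theorem lemma5:
  fixes \<alpha> \<beta> :: real and T :: nat
  assumes "\<beta> > -1" and "0 < \<alpha>" and "\<alpha> < 1" and "T \<ge> 2"
  shows "S_sum T \<alpha> \<beta>
    \<le> 2 powr (2 + min \<alpha> \<beta>) * xi (max \<alpha> \<beta>) / (real T) powr (1 + min \<alpha> \<beta>)"
proof -
  define m where "m = min \<alpha> \<beta>"
  define M where "M = max \<alpha> \<beta>"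
  define C where "C = (2 / real T) powr (1 + m)"
  define g where "g = (\<lambda>k::nat. real k powr -(1+M))"
  have M0: "M > 0" using assms unfolding M_def by auto
  have g0: "g k \<ge> 0" for k unfolding g_def by simp
  have C0: "C \<ge> 0" unfolding C_def by simp
  have hterm: "1 / ((real t) powr (1 + \<beta>) * (real (T - t)) powr (1 + \<alpha>)) \<le> C * (g t + g (T - t))"
    if t: "t \<in> {1..T-1}" for t
  proof (cases "t \<le> T - t")
    case True
    have "1 / ((real t) powr (1 + \<beta>) * (real (T - t)) powr (1 + \<alpha>)) \<le> C * g t"
      using key[of "real t" "real (T-t)" "real T" \<beta> \<alpha>] True t assms
      unfolding C_def g_def m_def M_def by (auto simp: min.commute max.commute)
    also have "\<dots> \<le> C * (g t + g (T - t))" using C0 g0 by (intro mult_left_mono) auto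
    finally show ?thesis .
  next
    case False
    have "1 / ((real t) powr (1 + \<beta>) * (real (T - t)) powr (1 + \<alpha>)) \<le> C * g (T - t)"
      using key[of "real (T-t)" "real t" "real T" \<alpha> \<beta>] False t assms
      unfolding C_def g_def m_def M_def by (auto simp: mult.commute)
    also have "\<dots> \<le> C * (g t + g (T - t))" using C0 g0 by (intro mult_left_mono) auto
    finally show ?thesis .
  qed
  have S1: "S_sum T \<alpha> \<beta> \<le> (\<Sum>t=1..T-1. C * (g t + g (T - t)))"
    unfolding S_sum_def by (intro sum_mono hterm)
  have rev: "(\<Sum>t=1..T-1. g (T - t)) = (\<Sum>t=1..T-1. g t)"
    by (rule sum.reindex_bij_witness[of _ "\<lambda>t. T - t" "\<lambda>t. T - t"]) auto
  have summ: "summable (\<lambda>k. g (Suc k))"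
  proof -
    have "summable (\<lambda>n. real n powr -(1+M))" using M0 by (subst summable_real_powr_iff) auto
    then show ?thesis unfolding g_def by (subst summable_Suc_iff)
  qed
  have shift: "(\<Sum>t=1..T-1. g t) = (\<Sum>k<T-1. g (Suc k))"
  proof -
    have "(\<Sum>t=1..T-1. g t) = (\<Sum>t\<in>Suc ` {..<T-1}. g t)"
    proof (rule sum.cong)
      have "Suc ` {..<T-1} = {1..<T}" using assms by (simp add: lessThan_atLeast0 image_Suc_atLeastLessThan)
      also have "\<dots> = {1..T-1}" using assms by auto
      finally show "{1..T-1} = Suc ` {..<T-1}" by simp
    qed simp
    also have "\<dots> = (\<Sum>k<T-1. g (Suc k))" by (subst sum.reindex) auto
    finally show ?thesis .
  qed
  have le: "(\<Sum>k<T-1. g (Suc k)) \<le> xi M"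
  proof -
    have "(\<Sum>k<T-1. g (Suc k)) \<le> (\<Sum>k. g (Suc k))"
      by (rule sum_le_suminf[OF summ]) (use g0 in auto)
    also have "\<dots> = xi M" unfolding xi_def g_def by simp
    finally show ?thesis .
  qed
  have E1: "(\<Sum>t=1..T-1. C * (g t + g (T - t))) = 2 * C * (\<Sum>t=1..T-1. g t)"
  proof -
    have "(\<Sum>t=1..T-1. C * (g t + g (T - t))) = C * ((\<Sum>t=1..T-1. g t) + (\<Sum>t=1..T-1. g (T - t)))"
      by (simp only: sum_distrib_left[symmetric] sum.distrib)
    also have "\<dots> = C * ((\<Sum>t=1..T-1. g t) + (\<Sum>t=1..T-1. g t))" by (simp only: rev)
    also have "\<dots> = 2 * C * (\<Sum>t=1..T-1. g t)" by (simp only: mult_2 distrib_left distrib_right)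
    finally show ?thesis .
  qed
  have E2: "2 * C * (\<Sum>t=1..T-1. g t) \<le> 2 * C * xi M"
    using le shift C0 by (intro mult_left_mono) auto
  have P: "(2 / real T) powr (1 + m) = 2 powr (1 + m) / (real T) powr (1 + m)"
    by (rule powr_divide)
  have Q: "2 powr (2 + m) = 2 * 2 powr (1 + m)"
    using powr_add[of "2::real" 1 "1 + m"] by simp
  have E3: "2 * C * xi M = 2 powr (2 + m) * xi M / (real T) powr (1 + m)"
    unfolding C_def P Q by simp
  have F: "S_sum T \<alpha> \<beta> \<le> 2 powr (2 + m) * xi M / (real T) powr (1 + m)"
    using S1 E1 E2 E3 by linarith
  then show ?thesis unfolding m_def M_def .
qed

end
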